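(* Let $(X,(\cdot,\cdot|\cdot))$ be a 2-inner product space over $\mathbb{K}\in\{\mathbb{R},\mathbb{C}\}$, let $n$ be a positive integer, let $z_1,\dots,z_n,z\in X$ and $\mu_1,\dots,\mu_n\in\mathbb{K}$. Then \[ \Big\|\sum_{i=1}^n\mu_iz_i\,\Big|\,z\Big\|^2\le \sum_{i=1}^n|\mu_i|^2\max_{1\le i\le n}\|z_i|z\|^2+\Big[\Big(\sum_{i=1}^n|\mu_i|^2\Big)^2-\sum_{i=1}^n|\mu_i|^4\Big]^{1/2}\Big(\sum_{1\le i\ne j\le n}|(z_i,z_j|z)|^2\Big)^{1/2} \] \[ \le \sum_{i=1}^n|\mu_i|^2\left\{\max_{1\le i\le n}\|z_i|z\|^2+\Big(\sum_{1\le i\ne j\le n}|(z_i,z_j|z)|^2\Big)^{1/2}\right\}. \]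
   Context: A 2-inner product on a linear space $X$ of dimension greater than $1$ over $\mathbb{K}$ ($\mathbb{K}=\mathbb{R}$ or $\mathbb{C}$) is a function $(\cdot,\cdot|\cdot):X\times X\times X\to\mathbb{K}$ such that for all $x,x',y,z\in X$ and $\alpha\in\mathbb{K}$: (i) $(x,x|z)\ge 0$, and $(x,x|z)=0$ iff $x$ and $z$ are linearly dependent; (ii) $(x,x|z)=(z,z|x)$; (iii) $(y,x|z)=\overline{(x,y|z)}$; (iv) $(\alpha x,y|z)=\alpha(x,y|z)$; (v) $(x+x',y|z)=(x,y|z)+(x',y|z)$. The associated 2-norm is $\|x|z\|=\sqrt{(x,x|z)}$. The sum $\sum_{1\le i\ne j\le n}$ runs over all ordered pairs $(i,j)$ with $i\ne j$. *)

theory Defs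
  imports "HOL-Analysis.Analysis"
begin

definition lin_dep2 :: "('k::field \<Rightarrow> 'v::ab_group_add \<Rightarrow> 'v) \<Rightarrow> 'v \<Rightarrow> 'v \<Rightarrow> bool" where
  "lin_dep2 sc x z \<longleftrightarrow> (\<exists>a b. (a \<noteq> 0 \<or> b \<noteq> 0) \<and> sc a x + sc b z = 0)"

text \<open>A 2-inner product on the vector space (UNIV, sc) over the field 'k, where
  conj is the conjugation of 'k (identity for real scalars, cnj for complex scalars).
  The space is required to have dimension greater than 1.\<close>
definition two_inner_product ::
  "('k::real_normed_field \<Rightarrow> 'k) \<Rightarrow> ('k \<Rightarrow> 'v::ab_group_add \<Rightarrow> 'v) \<Rightarrow> ('v \<Rightarrow> 'v \<Rightarrow> 'v \<Rightarrow> 'k) \<Rightarrow> bool" where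
  "two_inner_product cj sc ip \<longleftrightarrow>
     vector_space sc \<and>
     (\<exists>x y. \<not> lin_dep2 sc x y) \<and>
     (\<forall>x z. \<exists>r::real. r \<ge> 0 \<and> ip x x z = of_real r) \<and>
     (\<forall>x z. ip x x z = 0 \<longleftrightarrow> lin_dep2 sc x z) \<and>
     (\<forall>x z. ip x x z = ip z z x) \<and>
     (\<forall>x y z. ip y x z = cj (ip x y z)) \<and>
     (\<forall>a x y z. ip (sc a x) y z = a * ip x y z) \<and>
     (\<forall>x x' y z. ip (x + x') y z = ip x y z + ip x' y z)"

definition two_norm :: "('v \<Rightarrow> 'v \<Rightarrow> 'v \<Rightarrow> 'k::real_normed_field) \<Rightarrow> 'v \<Rightarrow> 'v \<Rightarrow> real" where
  "two_norm ip x z = sqrt (norm (ip x x z))"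

text \<open>The chain of inequalities of Corollary 2.3 for given n, z_1..z_n, z, mu_1..mu_n
  (the sum over i ~= j runs over ordered pairs).\<close>
definition cor23_chain ::
  "('k::real_normed_field \<Rightarrow> 'v::ab_group_add \<Rightarrow> 'v) \<Rightarrow> ('v \<Rightarrow> 'v \<Rightarrow> 'v \<Rightarrow> 'k) \<Rightarrow> nat \<Rightarrow> (nat \<Rightarrow> 'v) \<Rightarrow> 'v \<Rightarrow> (nat \<Rightarrow> 'k) \<Rightarrow> bool" where
  "cor23_chain sc ip n zs z \<mu> \<longleftrightarrow>
     (let M = Max ((\<lambda>i. (two_norm ip (zs i) z)\<^sup>2) ` {1..n});
          S2 = (\<Sum>i=1..n. (norm (\<mu> i))\<^sup>2);
          S4 = (\<Sum>i=1..n. (norm (\<mu> i))^4);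
          P = (\<Sum>i\<in>{1..n}. \<Sum>j\<in>{1..n} - {i}. (norm (ip (zs i) (zs j) z))\<^sup>2)
      in (two_norm ip (\<Sum>i=1..n. sc (\<mu> i) (zs i)) z)\<^sup>2
           \<le> S2 * M + sqrt (S2\<^sup>2 - S4) * sqrt P
       \<and> S2 * M + sqrt (S2\<^sup>2 - S4) * sqrt P \<le> S2 * (M + sqrt P))"

end

theory Submission
  imports Defs
begin

lemma generic_chain:
  fixes cj :: "'k::real_normed_field \<Rightarrow> 'k" and sc :: "'k \<Rightarrow> 'v::ab_group_add \<Rightarrow> 'v"
    and ip :: "'v \<Rightarrow> 'v \<Rightarrow> 'v \<Rightarrow> 'k"
  assumes cadd: "\<And>a b. cj (a + b) = cj a + cj b"
    and cmul: "\<And>a b. cj (a * b) = cj a * cj b"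
    and cnorm: "\<And>a. norm (cj a) = norm a"
    and sym: "\<And>x y z. ip y x z = cj (ip x y z)"
    and hom: "\<And>a x y z. ip (sc a x) y z = a * ip x y z"
    and add: "\<And>x x' y z. ip (x + x') y z = ip x y z + ip x' y z"
  shows "cor23_chain sc ip n zs z \<mu>"
proof -
  have c0: "cj 0 = 0" using cadd[of 0 0] by simp
  have ip0: "ip 0 y z' = 0" for y z' using add[of 0 0 y z'] by simp
  have ipsum: "ip (\<Sum>i\<in>A. f i) y z' = (\<Sum>i\<in>A. ip (f i) y z')" for A f y z'
    by (induct A rule: infinite_finite_induct) (auto simp: ip0 add)
  have addr: "ip x (y + y') z' = ip x y z' + ip x y' z'" for x y y' z'
  proof -
    have "ip x (y + y') z' = cj (ip (y + y') x z')" by (rule sym)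
    also have "\<dots> = cj (ip y x z') + cj (ip y' x z')" by (simp only: add cadd)
    also have "\<dots> = ip x y z' + ip x y' z'" by (simp only: sym[of x y z'] sym[of x y' z'])
    finally show ?thesis .
  qed
  have homr: "ip x (sc a y) z' = cj a * ip x y z'" for x a y z'
  proof -
    have "ip x (sc a y) z' = cj (ip (sc a y) x z')" by (rule sym)
    also have "\<dots> = cj a * cj (ip y x z')" by (simp only: hom cmul)
    also have "\<dots> = cj a * ip x y z'" by (simp only: sym[of x y z'])
    finally show ?thesis .
  qed
  have ip0r: "ip x 0 z' = 0" for x z' using addr[of x 0 0 z'] by simp
  have ipsumr: "ip x (\<Sum>i\<in>A. f i) z' = (\<Sum>i\<in>A. ip x (f i) z')" for A f x z'
    by (induct A rule: infinite_finite_induct) (auto simp: ip0r addr)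
  define I where "I = {1..n}"
  define a where "a i j = ip (zs i) (zs j) z" for i j
  define M where "M = Max ((\<lambda>i. (two_norm ip (zs i) z)\<^sup>2) ` {1..n})"
  define S2 where "S2 = (\<Sum>i=1..n. (norm (\<mu> i))\<^sup>2)"
  define S4 where "S4 = (\<Sum>i=1..n. (norm (\<mu> i))^4)"
  define P where "P = (\<Sum>i\<in>{1..n}. \<Sum>j\<in>{1..n} - {i}. (norm (ip (zs i) (zs j) z))\<^sup>2)"
  define w where "w = (\<Sum>i=1..n. sc (\<mu> i) (zs i))"
  define T where "T i j = \<mu> i * cj (\<mu> j) * a i j" for i j
  have fin: "finite I" by (simp add: I_def)
  have tn: "(two_norm ip x z')\<^sup>2 = norm (ip x x z')" for x z'
    by (simp add: two_norm_def)
  have exp: "ip w w z = (\<Sum>i\<in>I. \<Sum>j\<in>I. T i j)"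
    unfolding w_def ipsum hom ipsumr homr T_def a_def I_def
    by (simp add: sum_distrib_left mult.assoc) (subst sum.swap, simp add: mult.left_commute)
  also have "\<dots> = (\<Sum>i\<in>I. T i i) + (\<Sum>i\<in>I. \<Sum>j\<in>I - {i}. T i j)"
    by (simp add: sum.distrib[symmetric] fin sum.remove)
  finally have e: "ip w w z = (\<Sum>i\<in>I. T i i) + (\<Sum>i\<in>I. \<Sum>j\<in>I - {i}. T i j)" .
  have nT: "norm (T i j) = norm (\<mu> i) * norm (\<mu> j) * norm (a i j)" for i j
    by (simp add: T_def norm_mult cnorm)
  have A: "norm (\<Sum>i\<in>I. T i i) \<le> S2 * M"
  proof -
    have "norm (\<Sum>i\<in>I. T i i) \<le> (\<Sum>i\<in>I. norm (T i i))" by (rule norm_sum)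
    also have "\<dots> \<le> (\<Sum>i\<in>I. (norm (\<mu> i))\<^sup>2 * M)"
    proof (rule sum_mono)
      fix i assume "i \<in> I"
      hence "norm (a i i) \<le> M" unfolding M_def a_def I_def
        by (metis (no_types, lifting) Max_ge finite_atLeastAtMost finite_imageI image_eqI tn)
      thus "norm (T i i) \<le> (norm (\<mu> i))\<^sup>2 * M"
        by (simp add: nT power2_eq_square mult_left_mono)
    qed
    also have "\<dots> = S2 * M" by (simp add: S2_def I_def sum_distrib_right)
    finally show ?thesis .
  qed
  define Sg where "Sg = Sigma I (\<lambda>i. I - {i})"
  define f where "f p = norm (\<mu> (fst p)) * norm (\<mu> (snd p))" for p
  define g where "g p = norm (a (fst p) (snd p))" for p
  have finS: "finite Sg" using fin by (simp add: Sg_def)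
  have B: "norm (\<Sum>i\<in>I. \<Sum>j\<in>I - {i}. T i j) \<le> sqrt (S2\<^sup>2 - S4) * sqrt P"
  proof -
    have "norm (\<Sum>i\<in>I. \<Sum>j\<in>I - {i}. T i j) \<le> (\<Sum>i\<in>I. norm (\<Sum>j\<in>I - {i}. T i j))"
      by (rule norm_sum)
    also have "\<dots> \<le> (\<Sum>i\<in>I. \<Sum>j\<in>I - {i}. norm (T i j))"
      by (intro sum_mono norm_sum)
    also have "\<dots> = (\<Sum>p\<in>Sg. \<bar>f p\<bar> * \<bar>g p\<bar>)"
      unfolding Sg_def using fin
      by (subst sum.Sigma) (auto simp: nT f_def g_def split_beta)
    also have "\<dots> \<le> L2_set f Sg * L2_set g Sg" by (rule L2_set_mult_ineq)
    also have "L2_set g Sg = sqrt P"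
      unfolding L2_set_def Sg_def P_def using fin
      by (subst sum.Sigma) (auto simp: g_def a_def I_def split_beta)
    also have "L2_set f Sg = sqrt (S2\<^sup>2 - S4)"
    proof -
      have "(\<Sum>p\<in>Sg. (f p)\<^sup>2) = (\<Sum>i\<in>I. \<Sum>j\<in>I - {i}. (norm (\<mu> i))\<^sup>2 * (norm (\<mu> j))\<^sup>2)"
        unfolding Sg_def using fin
        by (subst sum.Sigma) (auto simp: f_def power_mult_distrib split_beta)
      also have "\<dots> = (\<Sum>i\<in>I. (norm (\<mu> i))\<^sup>2 * (S2 - (norm (\<mu> i))\<^sup>2))"
      proof (rule sum.cong[OF refl])
        fix i assume "i \<in> I"
        hence "(\<Sum>j\<in>I - {i}. (norm (\<mu> j))\<^sup>2) = S2 - (norm (\<mu> i))\<^sup>2"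
          unfolding S2_def I_def using fin by (simp add: sum_diff1 I_def)
        thus "(\<Sum>j\<in>I - {i}. (norm (\<mu> i))\<^sup>2 * (norm (\<mu> j))\<^sup>2) = (norm (\<mu> i))\<^sup>2 * (S2 - (norm (\<mu> i))\<^sup>2)"
          by (simp add: sum_distrib_left[symmetric])
      qed
      also have "\<dots> = S2\<^sup>2 - S4"
      proof -
        have "(\<Sum>i\<in>I. (norm (\<mu> i))\<^sup>2 * (S2 - (norm (\<mu> i))\<^sup>2))
            = (\<Sum>i\<in>I. (norm (\<mu> i))\<^sup>2 * S2) - (\<Sum>i\<in>I. (norm (\<mu> i))^4)"
          by (simp add: right_diff_distrib sum_subtractf flip: power_add)
        also have "\<dots> = S2\<^sup>2 - S4"
          by (simp add: S2_def S4_def I_def sum_distrib_right[symmetric] power2_eq_square)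
        finally show ?thesis .
      qed
      finally show ?thesis by (simp add: L2_set_def)
    qed
    finally show ?thesis by simp
  qed
  have lhs: "(two_norm ip w z)\<^sup>2 \<le> S2 * M + sqrt (S2\<^sup>2 - S4) * sqrt P"
    using A B norm_triangle_ineq[of "\<Sum>i\<in>I. T i i" "\<Sum>i\<in>I. \<Sum>j\<in>I - {i}. T i j"]
    by (simp add: tn e)
  have S2n: "S2 \<ge> 0" by (simp add: S2_def sum_nonneg)
  have S4n: "S4 \<ge> 0" by (simp add: S4_def sum_nonneg)
  have "sqrt (S2\<^sup>2 - S4) \<le> S2"
    using S2n S4n real_sqrt_le_mono[of "S2\<^sup>2 - S4" "S2\<^sup>2"] by simp
  hence rhs: "S2 * M + sqrt (S2\<^sup>2 - S4) * sqrt P \<le> S2 * (M + sqrt P)"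
    by (simp add: distrib_left mult_right_mono real_sqrt_ge_zero P_def sum_nonneg)
  show ?thesis unfolding cor23_chain_def Let_def
    using lhs rhs by (simp add: M_def S2_def S4_def P_def w_def)
qed

theorem corollary2p3:
  fixes scaleR' :: "real \<Rightarrow> 'v::ab_group_add \<Rightarrow> 'v" and ipR :: "'v \<Rightarrow> 'v \<Rightarrow> 'v \<Rightarrow> real"
    and scaleC' :: "complex \<Rightarrow> 'w::ab_group_add \<Rightarrow> 'w" and ipC :: "'w \<Rightarrow> 'w \<Rightarrow> 'w \<Rightarrow> complex"
  shows "(\<forall>n (zs::nat \<Rightarrow> 'v) z (\<mu>::nat \<Rightarrow> real).
            two_inner_product id scaleR' ipR \<and> n \<ge> 1 \<longrightarrow> cor23_chain scaleR' ipR n zs z \<mu>)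
       \<and> (\<forall>n (zs::nat \<Rightarrow> 'w) z (\<mu>::nat \<Rightarrow> complex).
            two_inner_product cnj scaleC' ipC \<and> n \<ge> 1 \<longrightarrow> cor23_chain scaleC' ipC n zs z \<mu>)"
proof (intro conjI allI impI)
  fix n zs z \<mu>
  assume h: "two_inner_product id scaleR' ipR \<and> (n::nat) \<ge> 1"
  show "cor23_chain scaleR' ipR n zs z \<mu>"
    proof -
    from h have d: "two_inner_product id scaleR' ipR" by simp
    show ?thesis
    proof (rule generic_chain[where cj = id])
      show "\<And>x y z. ipR y x z = id (ipR x y z)" using d unfolding two_inner_product_def by blast
      show "\<And>a x y z. ipR (scaleR' a x) y z = a * ipR x y z" using d unfolding two_inner_product_def by blast
      show "\<And>x x' y z. ipR (x + x') y z = ipR x y z + ipR x' y z" using d unfolding two_inner_product_def by blast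
    qed (simp_all add: )
  qed
next
  fix n zs z \<mu>
  assume h: "two_inner_product cnj scaleC' ipC \<and> (n::nat) \<ge> 1"
  show "cor23_chain scaleC' ipC n zs z \<mu>"
    proof -
    from h have d: "two_inner_product cnj scaleC' ipC" by simp
    show ?thesis
    proof (rule generic_chain[where cj = cnj])
      show "\<And>x y z. ipC y x z = cnj (ipC x y z)" using d unfolding two_inner_product_def by blast
      show "\<And>a x y z. ipC (scaleC' a x) y z = a * ipC x y z" using d unfolding two_inner_product_def by blast
      show "\<And>x x' y z. ipC (x + x') y z = ipC x y z + ipC x' y z" using d unfolding two_inner_product_def by blast
    qed (simp_all add: complex_cnj_add complex_cnj_mult)
  qed
qed

end
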